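(* Let $K$ be any real number field and let $a,b$ be arbitrary nonzero elements of $K$ with $a>0$. Then there exist a generator $g\neq 1$ of $K$ (i.e. $\mathbb{Q}(g)=K$) and $m_1,m_2,m_3,m_4,m_5\in K$ with $m_2\neq m_3$ such that $$\frac{1}{a}\left(\frac{m_1}{m_2-m_3}\right)^2 - \frac{b}{a}\left(\frac{m_4}{m_2-m_3}\right)^2 + b\left(\frac{m_5}{m_2-m_3}\right)^2 = 1 + \frac{2}{g-1}.$$
   Context: A real number field is a field $K\subset\mathbb{R}$ with $[K:\mathbb{Q}]<\infty$. *)

theory Defs
  imports Complex_Main
begin

definition is_real_subfield :: "real set \<Rightarrow> bool" where
  "is_real_subfield F \<longleftrightarrow> 0 \<in> F \<and> 1 \<in> F \<and>
     (\<forall>x\<in>F. \<forall>y\<in>F. x + y \<in> F \<and> x - y \<in> F \<and> x * y \<in> F) \<and>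
     (\<forall>x\<in>F. x \<noteq> 0 \<longrightarrow> inverse x \<in> F)"

text \<open>A real number field: a subfield K of the reals with [K:Q] finite, i.e. K is
  spanned over Q by finitely many elements.\<close>
definition real_number_field :: "real set \<Rightarrow> bool" where
  "real_number_field K \<longleftrightarrow> is_real_subfield K \<and>
     (\<exists>B. finite B \<and> B \<subseteq> K \<and>
        (\<forall>x\<in>K. \<exists>c :: real \<Rightarrow> rat. x = (\<Sum>v\<in>B. of_rat (c v) * v)))"

definition gen_field :: "real \<Rightarrow> real set" where
  "gen_field g = \<Inter>{F. is_real_subfield F \<and> g \<in> F}"

end

theory Submission
  imports Defs "HOL-Computational_Algebra.Fundamental_Theorem_Algebra"
begin


definition sfield :: "'a::field set \<Rightarrow> bool" where
  "sfield S \<longleftrightarrow> 0 \<in> S \<and> 1 \<in> S \<and> (\<forall>x\<in>S. \<forall>y\<in>S. x + y \<in> S \<and> x * y \<in> S) \<and>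
     (\<forall>x\<in>S. - x \<in> S) \<and> (\<forall>x\<in>S. inverse x \<in> S)"

definition polyin :: "'a::zero set \<Rightarrow> 'a poly \<Rightarrow> bool" where
  "polyin S p \<longleftrightarrow> (\<forall>i. coeff p i \<in> S)"

context fixes S :: "'a::field set" assumes S: "sfield S"
begin
lemma S0: "0 \<in> S" and S1: "1 \<in> S" using S by (auto simp: sfield_def)
lemma Sadd: "x \<in> S \<Longrightarrow> y \<in> S \<Longrightarrow> x + y \<in> S" using S by (auto simp: sfield_def)
lemma Smult: "x \<in> S \<Longrightarrow> y \<in> S \<Longrightarrow> x * y \<in> S" using S by (auto simp: sfield_def)
lemma Sneg: "x \<in> S \<Longrightarrow> - x \<in> S" using S by (auto simp: sfield_def)
lemma Sinv: "x \<in> S \<Longrightarrow> inverse x \<in> S" using S by (auto simp: sfield_def)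
lemma Sdiff: "x \<in> S \<Longrightarrow> y \<in> S \<Longrightarrow> x - y \<in> S" using Sadd Sneg by (metis diff_conv_add_uminus)
lemma Sdiv: "x \<in> S \<Longrightarrow> y \<in> S \<Longrightarrow> x / y \<in> S" using Smult Sinv by (metis divide_inverse)
lemma Ssum: "(\<And>i. i \<in> A \<Longrightarrow> f i \<in> S) \<Longrightarrow> sum f A \<in> S"
  by (induction A rule: infinite_finite_induct) (auto intro: S0 Sadd)
lemma Spow: "x \<in> S \<Longrightarrow> x ^ n \<in> S"
  by (induction n) (auto intro: S1 Smult)
lemma Snat: "of_nat n \<in> S"
  by (induction n) (auto intro: S0 S1 Sadd)

lemma polyin_0: "polyin S 0" by (simp add: polyin_def S0)
lemma polyin_const: "c \<in> S \<Longrightarrow> polyin S [:c:]" by (auto simp: polyin_def coeff_pCons S0 split: nat.split)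
lemma polyin_pCons: "c \<in> S \<Longrightarrow> polyin S p \<Longrightarrow> polyin S (pCons c p)"
  by (auto simp: polyin_def coeff_pCons split: nat.split)
lemma polyin_add: "polyin S p \<Longrightarrow> polyin S q \<Longrightarrow> polyin S (p + q)"
  by (auto simp: polyin_def intro: Sadd)
lemma polyin_uminus: "polyin S p \<Longrightarrow> polyin S (- p)"
  by (auto simp: polyin_def intro: Sneg)
lemma polyin_diff: "polyin S p \<Longrightarrow> polyin S q \<Longrightarrow> polyin S (p - q)"
  by (auto simp: polyin_def intro: Sdiff)
lemma polyin_mult: "polyin S p \<Longrightarrow> polyin S q \<Longrightarrow> polyin S (p * q)"
  unfolding polyin_def coeff_mult by (auto intro!: Ssum Smult)
lemma polyin_smult: "c \<in> S \<Longrightarrow> polyin S p \<Longrightarrow> polyin S (smult c p)"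
  by (auto simp: polyin_def intro: Smult)
lemma polyin_monom: "c \<in> S \<Longrightarrow> polyin S (monom c n)"
  by (auto simp: polyin_def coeff_monom S0)
lemma polyin_pderiv: "polyin S p \<Longrightarrow> polyin S (pderiv p)"
  by (auto simp: polyin_def coeff_pderiv intro!: Smult Snat simp del: of_nat_Suc)
lemma polyin_power: "polyin S p \<Longrightarrow> polyin S (p ^ n)"
  by (induction n) (auto intro: polyin_mult polyin_const S1 simp: one_pCons)
lemma polyin_pcompose: "polyin S p \<Longrightarrow> polyin S q \<Longrightarrow> polyin S (pcompose p q)"
proof (induction p)
  case 0 then show ?case by (simp add: polyin_0)
next
  case (pCons a p)
  have "polyin S p" "a \<in> S" using pCons.prems by (auto simp: polyin_def coeff_pCons split: nat.splits)
  then show ?case using pCons by (auto simp: pcompose_pCons intro!: polyin_add polyin_const polyin_mult)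
qed
lemma poly_in: "polyin S p \<Longrightarrow> x \<in> S \<Longrightarrow> poly p x \<in> S"
  by (auto simp: poly_altdef polyin_def intro!: Ssum Smult Spow)

lemma division:
  assumes "polyin S p" "polyin S d" "d \<noteq> 0"
  shows "\<exists>q r. polyin S q \<and> polyin S r \<and> p = q * d + r \<and> (r = 0 \<or> degree r < degree d)"
  using assms(1)
proof (induction "degree p" arbitrary: p rule: less_induct)
  case less
  show ?case
  proof (cases "p = 0 \<or> degree p < degree d")
    case True
    then show ?thesis using less.prems by (intro exI[of _ 0] exI[of _ p]) (auto simp: polyin_0)
  next
    case False
    then have p0: "p \<noteq> 0" and dd: "degree d \<le> degree p" by auto
    define k where "k = degree p - degree d"
    define c where "c = lead_coeff p / lead_coeff d"
    define p' where "p' = p - monom c k * d"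
    have cS: "c \<in> S" unfolding c_def using less.prems assms(2) by (auto simp: polyin_def intro: Sdiv)
    have p'S: "polyin S p'" unfolding p'_def using less.prems assms(2) cS
      by (auto intro!: polyin_diff polyin_mult polyin_monom)
    have degm: "degree (monom c k * d) \<le> degree p"
      using degree_mult_le[of "monom c k" d] degree_monom_le[of c k] dd unfolding k_def by linarith
    have "degree p' \<le> degree p" unfolding p'_def using degm degree_diff_le by blast
    moreover have "coeff p' (degree p) = 0"
      unfolding p'_def c_def k_def using dd assms(3) by (simp add: coeff_monom_mult)
    ultimately have lt: "p' = 0 \<or> degree p' < degree p"
      by (metis le_neq_implies_less leading_coeff_0_iff)
    show ?thesis
    proof (cases "p' = 0")
      case True
      then show ?thesis using cS by (intro exI[of _ "monom c k"] exI[of _ 0])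
        (auto simp: polyin_0 polyin_monom p'_def)
    next
      case False
      with lt have "degree p' < degree p" by auto
      from less.hyps[OF this p'S] obtain q r where qr: "polyin S q" "polyin S r" "p' = q * d + r"
        "r = 0 \<or> degree r < degree d" by blast
      show ?thesis using qr cS
        by (intro exI[of _ "q + monom c k"] exI[of _ r])
          (auto simp: polyin_add polyin_monom p'_def algebra_simps eq_diff_eq)
    qed
  qed
qed

lemma euclid:
  assumes "polyin S p" "polyin S q" "q \<noteq> 0"
  shows "\<exists>d u v. polyin S d \<and> polyin S u \<and> polyin S v \<and> d \<noteq> 0 \<and> d dvd p \<and> d dvd q \<and> d = u * p + v * q"
  using assms
proof (induction "degree q" arbitrary: p q rule: less_induct)
  case less
  obtain s r where sr: "polyin S s" "polyin S r" "p = s * q + r" "r = 0 \<or> degree r < degree q"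
    using division[OF less.prems] by blast
  show ?case
  proof (cases "r = 0")
    case True
    have "polyin S 1" using polyin_const[OF S1] by (simp add: one_pCons)
    then have "polyin S q \<and> polyin S 0 \<and> polyin S 1 \<and> q \<noteq> 0 \<and> q dvd p \<and> q dvd q \<and> q = 0 * p + 1 * q"
      using less.prems sr True by (auto simp: polyin_0)
    then show ?thesis by blast
  next
    case False
    with sr have "degree r < degree q" by auto
    from less.hyps[OF this less.prems(2) sr(2) False] obtain d u v where
      d: "polyin S d" "polyin S u" "polyin S v" "d \<noteq> 0" "d dvd q" "d dvd r" "d = u * q + v * r" by blast
    have "d dvd p" using d sr(3) by auto
    moreover have "d = v * p + (u - v * s) * q" using d(7) sr(3) by (simp add: algebra_simps)
    ultimately show ?thesis using d sr
      by (intro exI[of _ d] exI[of _ v] exI[of _ "u - v * s"]) (auto intro!: polyin_diff polyin_mult)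
  qed
qed
end


lemma CL:
  fixes S :: "complex set" and \<beta> :: complex
  assumes S: "sfield S" and pS: "polyin S p" and gS: "polyin S g"
    and pb: "poly p \<beta> = 0" and gb: "poly g \<beta> = 0" and g'b: "poly (pderiv g) \<beta> \<noteq> 0"
    and uniq: "\<And>z. poly p z = 0 \<Longrightarrow> poly g z = 0 \<Longrightarrow> z = \<beta>"
  shows "\<beta> \<in> S"
proof -
  have g0: "g \<noteq> 0" using g'b by auto
  obtain d u v where d: "polyin S d" "polyin S u" "polyin S v" "d \<noteq> 0" "d dvd p" "d dvd g"
    "d = u * p + v * g" using euclid[OF S pS gS g0] by blast
  have "poly d \<beta> = 0" using d(7) pb gb by simp
  then obtain e where de: "d = [:-\<beta>, 1:] * e" using poly_eq_0_iff_dvd by (metis dvdE)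
  have e0: "e \<noteq> 0" using de d(4) by auto
  have "degree e = 0"
  proof (rule ccontr)
    assume "degree e \<noteq> 0"
    then have "\<not> constant (poly e)" by (simp add: constant_degree)
    then obtain z where z: "poly e z = 0" using fundamental_theorem_of_algebra by blast
    have dz: "poly d z = 0" using de z by simp
    have "poly p z = 0" using d(5) dz by (metis dvdE mult_eq_0_iff poly_mult)
    moreover have "poly g z = 0" using d(6) dz by (metis dvdE mult_eq_0_iff poly_mult)
    ultimately have "z = \<beta>" using uniq by blast
    with z obtain e' where "e = [:-\<beta>, 1:] * e'" using poly_eq_0_iff_dvd by (metis dvdE)
    with de d(6) obtain k where "g = [:-\<beta>, 1:] * ([:-\<beta>, 1:] * (e' * k))"
      by (metis dvdE mult.assoc)
    then have "poly (pderiv g) \<beta> = 0"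
      by (simp only: pderiv_mult poly_add poly_mult) (simp del: mult_pCons_left)
    with g'b show False by blast
  qed
  then have "e = [:coeff e 0:]" using degree_0_id by metis
  then have "d = [:-\<beta>, 1:] * [:coeff e 0:]" using de by metis
  then have dd: "coeff d 0 = - \<beta> * coeff e 0" "coeff d 1 = coeff e 0" by simp_all
  have c0: "coeff e 0 \<noteq> 0" using e0 \<open>e = [:coeff e 0:]\<close> by (metis pCons_0_0)
  have "coeff d 0 \<in> S" "coeff d 1 \<in> S" using d(1) by (auto simp: polyin_def)
  then have "- coeff d 0 / coeff d 1 \<in> S" using S by (intro Sdiv Sneg)
  then show ?thesis using dd c0 by (simp add: field_simps)
qed


lemma rsf_sfield: "is_real_subfield F \<Longrightarrow> sfield F"
  unfolding is_real_subfield_def sfield_def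
  by (metis diff_0 inverse_zero)

lemma rsf_of_sfield: "sfield F \<Longrightarrow> is_real_subfield F"
  unfolding is_real_subfield_def sfield_def by (metis diff_conv_add_uminus)

lemma sfield_Rats: "x \<in> \<rat> \<Longrightarrow> sfield S \<Longrightarrow> x \<in> S"
proof -
  assume x: "x \<in> \<rat>" and S: "sfield S"
  have int: "of_int k \<in> S" for k
  proof (cases "k \<ge> 0")
    case True then show ?thesis using Snat[OF S, of "nat k"] by simp
  next
    case False then show ?thesis using Sneg[OF S Snat[OF S, of "nat (-k)"]] by simp
  qed
  from x show ?thesis
    by (rule Rats_cases') (use int Sdiv[OF S] in auto)
qed

lemma sfield_Rats_set: "sfield (\<rat> :: 'a::field_char_0 set)"
  unfolding sfield_def by auto

lemma sfield_image_real: "sfield F \<Longrightarrow> sfield (complex_of_real ` F)"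
  unfolding sfield_def
  apply (intro conjI)
      apply (metis image_eqI of_real_0)
     apply (metis image_eqI of_real_1)
    apply (auto simp flip: of_real_add of_real_mult of_real_minus)
  by (metis image_eqI of_real_inverse)

lemma gen_sub: "is_real_subfield (gen_field x)"
  unfolding gen_field_def is_real_subfield_def by auto

lemma gen_mem: "x \<in> gen_field x"
  unfolding gen_field_def by auto

lemma gen_min: "is_real_subfield F \<Longrightarrow> x \<in> F \<Longrightarrow> gen_field x \<subseteq> F"
  unfolding gen_field_def by auto

lemma gen_eq: "y \<in> gen_field x \<Longrightarrow> x \<in> gen_field y \<Longrightarrow> gen_field x = gen_field y"
  using gen_min gen_sub by (metis subset_antisym)

lemma gen_sfield: "sfield (gen_field x)"
  using gen_sub rsf_sfield by blast



interpretation Qvs: vector_space "\<lambda>(q::rat) (x::real). of_rat q * x"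
  by unfold_locales (simp_all add: algebra_simps of_rat_add of_rat_mult)

lemma of_real_of_rat_eq: "of_real (of_rat q :: real) = (of_rat q :: complex)"
  by (cases q) (simp add: of_rat_rat of_real_divide)

lemma polyin_Rats_monom_sum:
  "polyin \<rat> (\<Sum>i\<in>I. monom (of_rat (w i) :: complex) i)"
  unfolding polyin_def coeff_sum by (auto intro!: Rats_sum)

lemma algebraic_K:
  assumes K: "real_number_field K" and x: "x \<in> K"
  shows "\<exists>m :: complex poly. polyin \<rat> m \<and> m \<noteq> 0 \<and> poly m (of_real x) = 0"
proof -
  have sfK: "sfield K" using K rsf_sfield unfolding real_number_field_def by blast
  obtain B where B: "finite B" "B \<subseteq> K" "\<forall>y\<in>K. \<exists>c :: real \<Rightarrow> rat. y = (\<Sum>v\<in>B. of_rat (c v) * v)"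
    using K unfolding real_number_field_def by blast
  have Ksp: "K \<subseteq> Qvs.span B"
  proof
    fix y assume "y \<in> K"
    then obtain c :: "real \<Rightarrow> rat" where "y = (\<Sum>v\<in>B. of_rat (c v) * v)" using B(3) by blast
    then show "y \<in> Qvs.span B" using B(1) by (simp, intro Qvs.span_sum Qvs.span_scale[of _ B] Qvs.span_base)
  qed
  define N where "N = card B"
  define P where "P = (\<lambda>i. x ^ i) ` {..N}"
  have PK: "P \<subseteq> K" unfolding P_def using Spow[OF sfK x] by auto
  show ?thesis
  proof (cases "inj_on (\<lambda>i. x ^ i) {..N}")
    case True
    have cP: "card P = Suc N" unfolding P_def using card_image[OF True] by simp
    have "\<not> Qvs.independent P"
    proof
      assume "Qvs.independent P"
      from Qvs.independent_span_bound[OF B(1) this] PK Ksp have "card P \<le> card B" by blast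
      with cP N_def show False by simp
    qed
    then obtain T u where T: "finite T" "T \<subseteq> P" "(\<Sum>v\<in>T. of_rat (u v) * v) = 0" "\<exists>v\<in>T. u v \<noteq> 0"
      unfolding Qvs.dependent_explicit by blast
    define I where "I = {i \<in> {..N}. x ^ i \<in> T}"
    have TI: "T = (\<lambda>i. x ^ i) ` I" using T(2) unfolding I_def P_def by auto
    have injI: "inj_on (\<lambda>i. x ^ i) I" using True by (rule inj_on_subset) (auto simp: I_def)
    define m :: "complex poly" where "m = (\<Sum>i\<in>I. monom (of_rat (u (x ^ i))) i)"
    have cm: "coeff m j = (if j \<in> I then of_rat (u (x ^ j)) else 0)" for j
      unfolding m_def coeff_sum using I_def by (simp add: sum.delta' coeff_monom)
    have "poly m (of_real x) = (\<Sum>i\<in>I. of_rat (u (x ^ i)) * of_real x ^ i)"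
      unfolding m_def poly_sum poly_monom by simp
    also have "\<dots> = of_real (\<Sum>i\<in>I. of_rat (u (x ^ i)) * x ^ i)"
      by (simp add: of_real_of_rat_eq)
    also have "(\<Sum>i\<in>I. of_rat (u (x ^ i)) * x ^ i) = (\<Sum>v\<in>T. of_rat (u v) * v)"
      unfolding TI by (simp add: sum.reindex[OF injI])
    finally have "poly m (of_real x) = 0" using T(3) by simp
    moreover have "m \<noteq> 0"
    proof
      assume "m = 0"
      from T(4) obtain v where v: "v \<in> T" "u v \<noteq> 0" by blast
      then obtain j where "j \<in> I" "v = x ^ j" using TI by blast
      then have "coeff m j \<noteq> 0" using cm v by simp
      with \<open>m = 0\<close> show False by simp
    qed
    moreover have "polyin \<rat> m" unfolding m_def by (rule polyin_Rats_monom_sum)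
    ultimately show ?thesis by blast
  next
    case False
    then obtain i j where ij: "i \<le> N" "j \<le> N" "i \<noteq> j" "x ^ i = x ^ j"
      unfolding inj_on_def by auto
    define m :: "complex poly" where "m = monom 1 j - monom 1 i"
    have "coeff m j = 1" using ij by (simp add: m_def)
    then have "m \<noteq> 0" by auto
    moreover have "poly m (of_real x) = 0" unfolding m_def poly_diff poly_monom
      by (metis ij(4) mult_1 of_real_power right_minus_eq)
    moreover have "polyin \<rat> m" unfolding m_def polyin_def by (auto simp: coeff_monom)
    ultimately show ?thesis by blast
  qed
qed


definition minp :: "complex \<Rightarrow> complex poly \<Rightarrow> bool" where
  "minp z m \<longleftrightarrow> polyin \<rat> m \<and> m \<noteq> 0 \<and> poly m z = 0 \<and>
     (\<forall>m'. polyin \<rat> m' \<and> m' \<noteq> 0 \<and> poly m' z = 0 \<longrightarrow> degree m \<le> degree m')"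

lemma minp_ex: "polyin \<rat> m \<Longrightarrow> m \<noteq> 0 \<Longrightarrow> poly m z = 0 \<Longrightarrow> \<exists>m. minp z m"
  unfolding minp_def using ex_has_least_nat[of "\<lambda>m. polyin \<rat> m \<and> m \<noteq> 0 \<and> poly m z = 0" m degree]
  by blast

lemmas QS = sfield_Rats_set[where 'a=complex]

lemma minp_deriv: assumes "minp z m" shows "poly (pderiv m) z \<noteq> 0"
proof
  assume a: "poly (pderiv m) z = 0"
  have m: "polyin \<rat> m" "m \<noteq> 0" "poly m z = 0" using assms by (auto simp: minp_def)
  have "degree m \<noteq> 0"
  proof
    assume "degree m = 0"
    then obtain c where "m = [:c:]" using degree_eq_zeroE by blast
    then show False using m by simp
  qed
  then have "pderiv m \<noteq> 0" by (simp add: pderiv_eq_0_iff)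
  moreover have "polyin \<rat> (pderiv m)" using m polyin_pderiv[OF QS] by blast
  ultimately have "degree m \<le> degree (pderiv m)" using assms a by (auto simp: minp_def)
  with \<open>degree m \<noteq> 0\<close> show False by (simp add: degree_pderiv)
qed

lemma minp_inverse:
  assumes "minp z m" "polyin \<rat> h" "poly h z \<noteq> 0"
  shows "\<exists>h'. polyin \<rat> h' \<and> poly h' z * poly h z = 1"
proof -
  have m: "polyin \<rat> m" "m \<noteq> 0" "poly m z = 0" using assms by (auto simp: minp_def)
  obtain d u v where d: "polyin \<rat> d" "polyin \<rat> u" "polyin \<rat> v" "d \<noteq> 0" "d dvd h" "d dvd m"
    "d = u * h + v * m" using euclid[OF QS assms(2) m(1,2)] by blast
  have dz: "poly d z \<noteq> 0" using d(5) assms(3) by (metis dvdE mult_eq_0_iff poly_mult)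
  obtain s r where sr: "polyin \<rat> s" "polyin \<rat> r" "m = s * d + r" "r = 0 \<or> degree r < degree d"
    using division[OF QS m(1) d(1,4)] by blast
  have "r = m - s * d" using sr(3) by simp
  then have "d dvd r" using d(6) by (simp add: dvd_diff)
  then have r0: "r = 0" using sr(4) dvd_imp_degree_le by fastforce
  have s0: "s \<noteq> 0" using sr(3) r0 m(2) by auto
  have "poly s z = 0" using sr(3) r0 m(3) dz by simp
  then have "degree m \<le> degree s" using assms(1) sr(1) s0 by (auto simp: minp_def)
  moreover have "degree m = degree s + degree d" using sr(3) r0 s0 d(4) by (simp add: degree_mult_eq)
  ultimately have "degree d = 0" by simp
  then obtain c where dc: "d = [:c:]" using degree_eq_zeroE by blast
  have c0: "c \<noteq> 0" using dz dc by simp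
  have cQ: "c \<in> \<rat>" using d(1) dc by (auto simp: polyin_def dest: spec[of _ 0])
  have "poly u z * poly h z = c" using d(7) m(3) dc by (metis poly_add poly_mult mult_zero_right add.right_neutral poly_const_conv)
  then have "poly (smult (1/c) u) z * poly h z = 1" using c0 by simp
  moreover have "polyin \<rat> (smult (1/c) u)" using cQ d(2) polyin_smult[OF QS] by simp
  ultimately show ?thesis by blast
qed

definition Rg :: "real \<Rightarrow> real set" where
  "Rg \<theta> = {y. \<exists>h :: complex poly. polyin \<rat> h \<and> poly h (of_real \<theta>) = of_real y}"

lemma Rg_field:
  fixes m :: "complex poly"
  assumes "polyin \<rat> m" "m \<noteq> 0" "poly m (of_real \<theta>) = 0"
  shows "gen_field \<theta> \<subseteq> Rg \<theta>"
proof -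
  obtain mm where mm: "minp (of_real \<theta>) mm" using minp_ex[OF assms] by blast
  have "sfield (Rg \<theta>)" unfolding sfield_def
  proof (intro conjI ballI)
    show "0 \<in> Rg \<theta>" unfolding Rg_def by (auto intro!: exI[of _ 0] polyin_0[OF QS])
    show "1 \<in> Rg \<theta>" unfolding Rg_def using polyin_const[OF QS, of 1] by (auto intro!: exI[of _ "[:1:]"])
  next
    fix x y assume "x \<in> Rg \<theta>" "y \<in> Rg \<theta>"
    then obtain hx hy :: "complex poly" where h: "polyin \<rat> hx" "poly hx (of_real \<theta>) = of_real x"
      "polyin \<rat> hy" "poly hy (of_real \<theta>) = of_real y" unfolding Rg_def by blast
    show "x + y \<in> Rg \<theta>" unfolding Rg_def using h polyin_add[OF QS, of hx hy]
      by (auto intro!: exI[of _ "hx + hy"])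
    show "x * y \<in> Rg \<theta>" unfolding Rg_def using h polyin_mult[OF QS, of hx hy]
      by (auto intro!: exI[of _ "hx * hy"])
  next
    fix x assume "x \<in> Rg \<theta>"
    then obtain hx :: "complex poly" where h: "polyin \<rat> hx" "poly hx (of_real \<theta>) = of_real x" unfolding Rg_def by blast
    show "- x \<in> Rg \<theta>" unfolding Rg_def using h polyin_uminus[OF QS, of hx]
      by (auto intro!: exI[of _ "- hx"])
    show "inverse x \<in> Rg \<theta>"
    proof (cases "x = 0")
      case True then show ?thesis using \<open>x \<in> Rg \<theta>\<close> by simp
    next
      case False
      then obtain h' where h': "polyin \<rat> h'" "poly h' (of_real \<theta>) * poly hx (of_real \<theta>) = 1"
        using minp_inverse[OF mm h(1)] h(2) by auto
      then have "poly h' (of_real \<theta>) = of_real (inverse x)" using h(2) False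
        by (simp add: field_simps)
      then show ?thesis unfolding Rg_def using h'(1) by blast
    qed
  qed
  moreover have "\<theta> \<in> Rg \<theta>" unfolding Rg_def
    using polyin_pCons[OF QS _ polyin_const[OF QS], of 0 1]
    by (auto intro!: exI[of _ "[:0,1:]"])
  ultimately show ?thesis using gen_min rsf_of_sfield by blast
qed


lemma polyin_mono: "polyin A p \<Longrightarrow> A \<subseteq> B \<Longrightarrow> polyin B p"
  unfolding polyin_def by blast

lemma rat_in_sfield: "sfield S \<Longrightarrow> (\<rat> :: 'a::field_char_0 set) \<subseteq> S"
  using sfield_Rats by blast

lemma exists_rat_avoid:
  assumes "finite (Bad :: complex set)"
  shows "\<exists>t::rat. (of_rat t :: complex) \<notin> Bad"
proof (rule ccontr)
  assume "\<not> ?thesis"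
  then have "range (of_rat :: rat \<Rightarrow> complex) \<subseteq> Bad" by auto
  then have "finite (range (of_rat :: rat \<Rightarrow> complex))" using assms finite_subset by blast
  moreover have "inj (of_rat :: rat \<Rightarrow> complex)" by (simp add: inj_on_def)
  ultimately have "finite (UNIV :: rat set)" using finite_imageD by blast
  then show False using infinite_UNIV_char_0 by blast
qed

lemma rnf_sfield: "real_number_field K \<Longrightarrow> sfield K"
  using rsf_sfield unfolding real_number_field_def by blast

lemma two_elem:
  assumes K: "real_number_field K" and a: "\<alpha> \<in> K" and b: "\<beta> \<in> K"
  shows "\<exists>\<gamma>\<in>K. \<alpha> \<in> gen_field \<gamma> \<and> \<beta> \<in> gen_field \<gamma>"
proof -
  have sK: "sfield K" using rnf_sfield[OF K] .
  obtain f :: "complex poly" where f: "polyin \<rat> f" "f \<noteq> 0" "poly f (of_real \<alpha>) = 0"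
    using algebraic_K[OF K a] by blast
  obtain g0 :: "complex poly" where "polyin \<rat> g0" "g0 \<noteq> 0" "poly g0 (of_real \<beta>) = 0"
    using algebraic_K[OF K b] by blast
  then obtain g where g: "minp (of_real \<beta>) g" using minp_ex by blast
  have gp: "polyin \<rat> g" "g \<noteq> 0" "poly g (of_real \<beta>) = 0" using g by (auto simp: minp_def)
  define A where "A = {z. poly f z = 0}"
  define Bs where "Bs = {z. poly g z = 0}"
  define Bad where "Bad = (\<lambda>(a, b). (a - complex_of_real \<alpha>) / (complex_of_real \<beta> - b)) ` (A \<times> (Bs - {complex_of_real \<beta>}))"
  have "finite Bad" unfolding Bad_def A_def Bs_def using poly_roots_finite[OF f(2)] poly_roots_finite[OF gp(2)]
    by auto
  then obtain t :: rat where t: "(of_rat t :: complex) \<notin> Bad" using exists_rat_avoid by blast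
  define \<gamma> where "\<gamma> = \<alpha> + of_rat t * \<beta>"
  have tK: "(of_rat t :: real) \<in> K" using sfield_Rats[OF _ sK] by auto
  have gK: "\<gamma> \<in> K" unfolding \<gamma>_def using sK a b tK by (intro Sadd Smult)
  define L where "L = gen_field \<gamma>"
  have sL: "sfield L" unfolding L_def by (rule gen_sfield)
  define S where "S = complex_of_real ` L"
  have sS: "sfield S" unfolding S_def by (rule sfield_image_real[OF sL])
  have QS': "\<rat> \<subseteq> S" by (rule rat_in_sfield[OF sS])
  have gL: "\<gamma> \<in> L" unfolding L_def by (rule gen_mem)
  define p where "p = pcompose f [:of_real \<gamma>, - of_rat t:]"
  have pS: "polyin S p" unfolding p_def
  proof (rule polyin_pcompose[OF sS])
    show "polyin S f" using polyin_mono[OF f(1) QS'] .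
    have "complex_of_real \<gamma> \<in> S" using gL S_def by blast
    moreover have "- (of_rat t :: complex) \<in> S" using QS' by (auto intro!: Sneg[OF sS])
    ultimately show "polyin S [:of_real \<gamma>, - of_rat t:]"
      by (intro polyin_pCons[OF sS] polyin_const[OF sS])
  qed
  have tt: "(of_rat t :: complex) = of_real (of_rat t)" by (simp add: of_real_of_rat_eq)
  have pb: "poly p (of_real \<beta>) = 0" unfolding p_def poly_pcompose \<gamma>_def using f(3)
    by (simp add: tt algebra_simps)
  have uniq: "z = of_real \<beta>" if "poly p z = 0" "poly g z = 0" for z
  proof (rule ccontr)
    assume ne: "z \<noteq> of_real \<beta>"
    define a where "a = complex_of_real \<gamma> - of_rat t * z"
    have "a \<in> A" using that(1) unfolding A_def a_def p_def poly_pcompose by (simp add: algebra_simps)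
    moreover have "z \<in> Bs - {complex_of_real \<beta>}" using that(2) ne unfolding Bs_def by auto
    ultimately have "(a - complex_of_real \<alpha>) / (complex_of_real \<beta> - z) \<in> Bad" unfolding Bad_def by force
    moreover have "(a - complex_of_real \<alpha>) / (complex_of_real \<beta> - z) = of_rat t"
    proof -
      have "a - complex_of_real \<alpha> = of_rat t * (complex_of_real \<beta> - z)"
        unfolding a_def \<gamma>_def by (simp add: tt algebra_simps)
      then show ?thesis using ne by simp
    qed
    ultimately show False using t by simp
  qed
  have "complex_of_real \<beta> \<in> S"
    using CL[OF sS pS polyin_mono[OF gp(1) QS'] pb gp(3) minp_deriv[OF g] uniq] by blast
  then have bL: "\<beta> \<in> L" unfolding S_def by auto
  have "(of_rat t :: real) \<in> L" using sfield_Rats[OF _ sL] by auto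
  then have "\<gamma> - of_rat t * \<beta> \<in> L" using bL gL by (intro Sdiff[OF sL] Smult[OF sL])
  then have "\<alpha> \<in> L" unfolding \<gamma>_def by simp
  with bL gK show ?thesis unfolding L_def by blast
qed

lemma PE:
  assumes K: "real_number_field K"
  shows "\<exists>\<theta>\<in>K. gen_field \<theta> = K"
proof -
  have sK: "sfield K" using rnf_sfield[OF K] .
  obtain B where B: "finite B" "B \<subseteq> K" "\<forall>y\<in>K. \<exists>c :: real \<Rightarrow> rat. y = (\<Sum>v\<in>B. of_rat (c v) * v)"
    using K unfolding real_number_field_def by blast
  have "finite T \<Longrightarrow> T \<subseteq> K \<Longrightarrow> \<exists>\<gamma>\<in>K. T \<subseteq> gen_field \<gamma>" for T
  proof (induction T rule: finite_induct)
    case empty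
    then show ?case using S0[OF sK] by blast
  next
    case (insert x T)
    then obtain \<gamma>0 where g0: "\<gamma>0 \<in> K" "T \<subseteq> gen_field \<gamma>0" by auto
    obtain \<gamma> where g: "\<gamma> \<in> K" "\<gamma>0 \<in> gen_field \<gamma>" "x \<in> gen_field \<gamma>"
      using two_elem[OF K g0(1), of x] insert.prems by auto
    have "gen_field \<gamma>0 \<subseteq> gen_field \<gamma>" using gen_min[OF gen_sub g(2)] .
    then show ?case using g g0 by blast
  qed
  from this[OF B(1,2)] obtain \<theta> where th: "\<theta> \<in> K" "B \<subseteq> gen_field \<theta>" by blast
  have "gen_field \<theta> \<subseteq> K" using gen_min[OF rsf_of_sfield[OF sK] th(1)] .
  moreover have "K \<subseteq> gen_field \<theta>"
  proof
    fix y assume "y \<in> K"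
    then obtain c :: "real \<Rightarrow> rat" where y: "y = (\<Sum>v\<in>B. of_rat (c v) * v)" using B(3) by blast
    have "(of_rat r :: real) \<in> gen_field \<theta>" for r using sfield_Rats[OF _ gen_sfield] by auto
    then show "y \<in> gen_field \<theta>" unfolding y using th(2)
      by (intro Ssum[OF gen_sfield] Smult[OF gen_sfield]) auto
  qed
  ultimately show ?thesis using th(1) by blast
qed


theorem lemma3p3:
  fixes K :: "real set" and a b :: real
  assumes "real_number_field K"
    and "a \<in> K" and "b \<in> K" and "a \<noteq> 0" and "b \<noteq> 0" and "a > 0"
  shows "\<exists>g m1 m2 m3 m4 m5. g \<in> K \<and> gen_field g = K \<and> g \<noteq> 1 \<and>
           m1 \<in> K \<and> m2 \<in> K \<and> m3 \<in> K \<and> m4 \<in> K \<and> m5 \<in> K \<and> m2 \<noteq> m3 \<and>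
           (1 / a) * (m1 / (m2 - m3))^2 - (b / a) * (m4 / (m2 - m3))^2
             + b * (m5 / (m2 - m3))^2 = 1 + 2 / (g - 1)"
proof -
  note K = assms(1)
  have sK: "sfield K" using rnf_sfield[OF K] .
  obtain \<theta>0 where th0: "\<theta>0 \<in> K" "gen_field \<theta>0 = K" using PE[OF K] by blast
  define \<theta> where "\<theta> = (if \<theta>0 = 0 then 1 else \<theta>0)"
  have thK: "\<theta> \<in> K" unfolding \<theta>_def using th0 S1[OF sK] by auto
  have th0': "\<theta> \<noteq> 0" unfolding \<theta>_def by auto
  have genth: "gen_field \<theta> = K"
  proof (cases "\<theta>0 = 0")
    case True
    have "gen_field 1 = gen_field 0"
      using gen_eq[of 0 1] gen_sub unfolding is_real_subfield_def by blast
    then show ?thesis using True th0 \<theta>_def by simp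
  qed (use th0 \<theta>_def in simp)
  obtain m0 :: "complex poly" where m0: "polyin \<rat> m0" "m0 \<noteq> 0" "poly m0 (of_real \<theta>) = 0"
    using algebraic_K[OF K thK] by blast
  have "a \<in> Rg \<theta>" using Rg_field[OF m0] genth assms(2) by blast
  then obtain h :: "complex poly" where h: "polyin \<rat> h" "poly h (of_real \<theta>) = of_real a"
    unfolding Rg_def by blast
  obtain m where m: "minp (of_real \<theta>) m" using minp_ex[OF m0] by blast
  have mp: "polyin \<rat> m" "m \<noteq> 0" "poly m (of_real \<theta>) = 0" using m by (auto simp: minp_def)
  define ca where "ca = complex_of_real a"
  define ct where "ct = complex_of_real \<theta>"
  have ca0: "ca \<noteq> 0" and ct0: "ct \<noteq> 0" using assms(4) th0' by (auto simp: ca_def ct_def)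
  define R where "R = {z. poly m z = 0} - {ct}"
  define Q where "Q = (\<lambda>r. [:poly h r - ca, 2 * (poly h r * r - ca * ct), poly h r * r^2 - ca * ct^2:])"
  define Q1 where "Q1 = [:ca - 1, 2 * ca * ct, ca * ct^2:]"
  have polyQ: "poly (Q r) s = poly h r * (1 + s * r)^2 - ca * (1 + s * ct)^2" for r s
    unfolding Q_def by (simp add: algebra_simps power2_eq_square)
  have polyQ1: "poly Q1 s = ca * (1 + s * ct)^2 - 1" for s
    unfolding Q1_def by (simp add: algebra_simps power2_eq_square)
  have Qnz: "Q r \<noteq> 0" if "r \<in> R" for r
  proof
    assume "Q r = 0"
    then have e1: "poly h r = ca" and e2: "poly h r * r = ca * ct" unfolding Q_def by auto
    then have "r = ct" using ca0 by simp
    with that show False unfolding R_def by auto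
  qed
  have Q1nz: "Q1 \<noteq> 0" unfolding Q1_def using ca0 ct0 by auto
  define Bad where "Bad = (\<Union>r\<in>R. {s. poly (Q r) s = 0}) \<union> {s. poly Q1 s = 0}"
  have "finite R" unfolding R_def using poly_roots_finite[OF mp(2)] by auto
  then have "finite Bad" unfolding Bad_def using poly_roots_finite[OF Qnz] poly_roots_finite[OF Q1nz] by auto
  then obtain t :: rat where t: "(of_rat t :: complex) \<notin> Bad" using exists_rat_avoid by blast
  define x where "x = a * (1 + of_rat t * \<theta>)"
  define u where "u = a * (1 + of_rat t * \<theta>)^2"
  have tt: "(of_rat t :: complex) = of_real (of_rat t)" by (simp add: of_real_of_rat_eq)
  have tK: "(of_rat t :: real) \<in> K" using sfield_Rats[OF _ sK] by auto
  have xK: "x \<in> K" unfolding x_def using assms(2) thK tK sK by (intro Smult Sadd S1)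
  have uK: "u \<in> K" unfolding u_def using assms(2) thK tK sK by (intro Smult Sadd S1 Spow)
  have "poly Q1 (of_rat t) \<noteq> 0" using t unfolding Bad_def by auto
  then have "complex_of_real u \<noteq> 1" unfolding polyQ1 u_def ca_def ct_def tt by simp
  then have u1: "u \<noteq> 1" by auto
  define L where "L = gen_field u"
  have sL: "sfield L" unfolding L_def by (rule gen_sfield)
  define S where "S = complex_of_real ` L"
  have sS: "sfield S" unfolding S_def by (rule sfield_image_real[OF sL])
  have QS': "\<rat> \<subseteq> S" by (rule rat_in_sfield[OF sS])
  have uL: "u \<in> L" unfolding L_def by (rule gen_mem)
  define p where "p = h * [:1, of_rat t:]^2 - [:complex_of_real u:]"
  have pS: "polyin S p" unfolding p_def
  proof (intro polyin_diff[OF sS] polyin_mult[OF sS] polyin_power[OF sS] polyin_pCons[OF sS] polyin_const[OF sS])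
    show "polyin S h" using polyin_mono[OF h(1) QS'] .
    show "1 \<in> S" by (rule S1[OF sS])
    show "of_rat t \<in> S" using QS' by auto
    show "complex_of_real u \<in> S" using uL S_def by blast
  qed (auto intro: polyin_0[OF sS])
  have polyp: "poly p z = poly h z * (1 + of_rat t * z)^2 - of_real u" for z
    unfolding p_def by (simp add: algebra_simps power2_eq_square)
  have pb: "poly p ct = 0" unfolding polyp using h(2) unfolding u_def ct_def
    by (simp add: tt)
  have uniq: "z = ct" if "poly p z = 0" "poly m z = 0" for z
  proof (rule ccontr)
    assume ne: "z \<noteq> ct"
    then have zR: "z \<in> R" using that(2) unfolding R_def by auto
    have "poly (Q z) (of_rat t) = poly p z"
      unfolding polyQ polyp u_def ca_def ct_def tt by (simp add: mult.commute)
    then have "of_rat t \<in> Bad" using that(1) zR unfolding Bad_def by auto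
    with t show False by blast
  qed
  have "ct \<in> S"
    using CL[OF sS pS polyin_mono[OF mp(1) QS'] pb mp(3)[folded ct_def] minp_deriv[OF m, folded ct_def] uniq]
    by blast
  then have thL: "\<theta> \<in> L" unfolding S_def ct_def by auto
  have genu: "gen_field u = K"
  proof
    show "gen_field u \<subseteq> K" using gen_min[OF rsf_of_sfield[OF sK] uK] .
    show "K \<subseteq> gen_field u" using gen_min[OF gen_sub thL[unfolded L_def]] genth by simp
  qed
  define g where "g = (u + 1) / (u - 1)"
  have g1: "g - 1 = 2 / (u - 1)" unfolding g_def using u1 by (simp add: field_simps)
  have gne: "g \<noteq> 1" using g1 u1 by auto
  have ug: "u = (g + 1) / (g - 1)" using g1 u1 unfolding g_def by (simp add: field_simps)
  have gK: "g \<in> K" unfolding g_def using uK sK by (intro Sdiv Sadd Sdiff S1)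
  have "gen_field g = gen_field u"
  proof (rule gen_eq)
    show "u \<in> gen_field g" unfolding ug using gen_sfield gen_mem
      by (intro Sdiv[OF gen_sfield] Sadd[OF gen_sfield] Sdiff[OF gen_sfield] S1[OF gen_sfield] gen_mem)
    show "g \<in> gen_field u" unfolding g_def
      by (intro Sdiv[OF gen_sfield] Sadd[OF gen_sfield] Sdiff[OF gen_sfield] S1[OF gen_sfield] gen_mem)
  qed
  then have geng: "gen_field g = K" using genu by simp
  have eq: "(1 / a) * (x / (1 - 0))^2 - (b / a) * (0 / (1 - 0))^2 + b * (0 / (1 - 0))^2 = 1 + 2 / (g - 1)"
    unfolding g1 x_def using u1 assms(4) unfolding u_def by (simp add: field_simps power2_eq_square)
  show ?thesis
    apply (rule exI[of _ g], rule exI[of _ x], rule exI[of _ 1], rule exI[of _ 0], rule exI[of _ 0], rule exI[of _ 0])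
    using gK geng gne xK S0[OF sK] S1[OF sK] eq by simp
qed

end
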